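(* Let $X$ be a finite simplicial complex and let $Y$ be a subcomplex of $X$. Then there is a homotopy equivalence $\Sigma(X\setminus Y)\simeq(\Sigma X)\setminus Y$.
   Context: Here $X$ and $Y$ are identified with their geometric realizations, $X\setminus Y$ is the complement of $|Y|$ in $|X|$, $\Sigma$ denotes the (unreduced) suspension, $\Sigma X$ is regarded as a simplicial complex (the join of $X$ with two points) containing $X$, and hence $Y$, as a subcomplex; $(\Sigma X)\setminus Y$ is the complement of $|Y|$ in $|\Sigma X|$. *)

theory Defs
  imports "HOL-Analysis.Analysis"
begin

definition simplicial_complex :: "'a set set \<Rightarrow> bool" where
  "simplicial_complex K \<longleftrightarrow>
     (\<forall>\<sigma>\<in>K. finite \<sigma> \<and> \<sigma> \<noteq> {} \<and> (\<forall>\<tau>. \<tau> \<subseteq> \<sigma> \<and> \<tau> \<noteq> {} \<longrightarrow> \<tau> \<in> K))"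

definition finite_simplicial_complex :: "'a set set \<Rightarrow> bool" where
  "finite_simplicial_complex K \<longleftrightarrow> simplicial_complex K \<and> finite K"

definition subcomplex :: "'a set set \<Rightarrow> 'a set set \<Rightarrow> bool" where
  "subcomplex L K \<longleftrightarrow> simplicial_complex L \<and> L \<subseteq> K"

text \<open>Geometric realization in barycentric coordinates, as a subset of the product
  space 'a \<Rightarrow> real (a point is a function of finite support lying in a simplex).\<close>
definition geom :: "'a set set \<Rightarrow> ('a \<Rightarrow> real) set" where
  "geom K = {f. (\<forall>v. 0 \<le> f v) \<and> {v. f v \<noteq> 0} \<in> K \<and> sum f {v. f v \<noteq> 0} = 1}"

definition cx_image :: "('a \<Rightarrow> 'b) \<Rightarrow> 'a set set \<Rightarrow> 'b set set" where
  "cx_image g K = (\<lambda>\<sigma>. g ` \<sigma>) ` K"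

text \<open>Simplicial suspension: join of K with the two points Inr True,
  Inr False.\<close>
definition susp_cx :: "'a set set \<Rightarrow> ('a + bool) set set" where
  "susp_cx K = cx_image Inl K
     \<union> {insert (Inr b) (Inl ` \<sigma>) | \<sigma> b. \<sigma> \<in> K}
     \<union> {{Inr b} | b. True}"

text \<open>Unreduced suspension of a topological space Z: the quotient of
  (Z \<times> [0,1]) \<squnion> {N,S} identifying Z \<times> {1} with N and
  Z \<times> {0} with S (so the suspension of the empty space is two points).
  N = Inl True, S = Inl False, interior points Inr (z,t) with 0 < t < 1.\<close>
definition susp_pt :: "'b \<times> real \<Rightarrow> bool + ('b \<times> real)" where
  "susp_pt p = (if snd p = 0 then Inl False else if snd p = 1 then Inl True else Inr p)"

definition suspension :: "'b topology \<Rightarrow> (bool + ('b \<times> real)) topology" where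
  "suspension Z = topology (\<lambda>U. U \<subseteq> range Inl \<union> Inr ` (topspace Z \<times> {0<..<1}) \<and>
       openin (prod_topology Z (top_of_set {0..1}))
              {p \<in> topspace Z \<times> {0..1}. susp_pt p \<in> U})"

end

theory Submission
  imports Defs
begin

section \<open>Suspension topology basics\<close>

definition SO :: "'b topology \<Rightarrow> (bool + ('b \<times> real)) set \<Rightarrow> bool" where
  "SO Z U \<longleftrightarrow> U \<subseteq> range Inl \<union> Inr ` (topspace Z \<times> {0<..<1}) \<and>
       openin (prod_topology Z (top_of_set {0..1}))
              {p \<in> topspace Z \<times> {0..1}. susp_pt p \<in> U}"

lemma istopology_SO: "istopology (SO Z)"
  unfolding istopology_def
proof (intro conjI allI impI)
  fix S T assume S: "SO Z S" and T: "SO Z T"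
  have "{p \<in> topspace Z \<times> {0..1}. susp_pt p \<in> S \<inter> T} =
        {p \<in> topspace Z \<times> {0..1}. susp_pt p \<in> S} \<inter> {p \<in> topspace Z \<times> {0..1}. susp_pt p \<in> T}"
    by auto
  with S T show "SO Z (S \<inter> T)"
    unfolding SO_def by auto
next
  fix K assume K: "\<forall>k\<in>K. SO Z k"
  have "{p \<in> topspace Z \<times> {0..1}. susp_pt p \<in> \<Union>K} =
        (\<Union>k\<in>K. {p \<in> topspace Z \<times> {0..1}. susp_pt p \<in> k})"
    by auto
  with K show "SO Z (\<Union>K)"
    unfolding SO_def by (auto intro!: openin_Union)
qed

lemma openin_suspension: "openin (suspension Z) = SO Z"
proof -
  have "suspension Z = topology (SO Z)"
    unfolding suspension_def SO_def[abs_def] by simp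
  then show ?thesis by (metis topology_inverse' istopology_SO)
qed

lemma topspace_suspension:
  "topspace (suspension Z) = range Inl \<union> Inr ` (topspace Z \<times> {0<..<1})"
proof -
  have "SO Z (range Inl \<union> Inr ` (topspace Z \<times> {0<..<1}))"
  proof -
    have "{p \<in> topspace Z \<times> {0..1}. susp_pt p \<in> range Inl \<union> Inr ` (topspace Z \<times> {0<..<1})}
        = topspace (prod_topology Z (top_of_set {0..1}))"
      by (auto simp: susp_pt_def)
    moreover have "openin (prod_topology Z (top_of_set {0..1::real})) (topspace Z \<times> {0..1})"
      by (metis openin_topspace topspace_prod_topology topspace_euclidean_subtopology)
    ultimately show ?thesis unfolding SO_def by simp
  qed
  then have "openin (suspension Z) (range Inl \<union> Inr ` (topspace Z \<times> {0<..<1}))"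
    by (simp add: openin_suspension)
  moreover have "SO Z (topspace (suspension Z))"
    using openin_topspace[of "suspension Z"] by (simp add: openin_suspension)
  ultimately have "range Inl \<union> Inr ` (topspace Z \<times> {0<..<1}) \<subseteq> topspace (suspension Z)"
      "topspace (suspension Z) \<subseteq> range Inl \<union> Inr ` (topspace Z \<times> {0<..<1})"
    by (simp_all only: SO_def openin_subset)
  then show ?thesis by (rule subset_antisym[rotated])
qed

lemma continuous_susp_pt:
  "continuous_map (prod_topology Z (top_of_set {0..1})) (suspension Z) susp_pt"
  unfolding continuous_map_def
proof (intro conjI allI impI)
  show "susp_pt \<in> topspace (prod_topology Z (top_of_set {0..1})) \<rightarrow> topspace (suspension Z)"
    by (auto simp: topspace_suspension susp_pt_def)
  fix U assume "openin (suspension Z) U"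
  then have "SO Z U" by (simp add: openin_suspension)
  then show "openin (prod_topology Z (top_of_set {0..1}))
          {x \<in> topspace (prod_topology Z (top_of_set {0..1})). susp_pt x \<in> U}"
    unfolding SO_def by simp
qed

lemma quotient_susp_pt:
  assumes "topspace Z \<noteq> {}"
  shows "quotient_map (prod_topology Z (top_of_set {0..1})) (suspension Z) susp_pt"
  unfolding quotient_map_def
proof (intro conjI allI impI)
  obtain z where z: "z \<in> topspace Z" using assms by (metis ex_in_conv)
  show "susp_pt ` topspace (prod_topology Z (top_of_set {0..1})) = topspace (suspension Z)"
  proof
    show "susp_pt ` topspace (prod_topology Z (top_of_set {0..1})) \<subseteq> topspace (suspension Z)"
      using continuous_susp_pt continuous_map_image_subset_topspace by blast
    show "topspace (suspension Z) \<subseteq> susp_pt ` topspace (prod_topology Z (top_of_set {0..1}))"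
    proof
      fix x assume "x \<in> topspace (suspension Z)"
      then consider b where "x = Inl b" | p where "p \<in> topspace Z \<times> {0<..<1}" "x = Inr p"
        by (auto simp: topspace_suspension)
      then show "x \<in> susp_pt ` topspace (prod_topology Z (top_of_set {0..1}))"
      proof cases
        case (1 b)
        show ?thesis
        proof (cases b)
          case True
          then have "x = susp_pt (z,1)" using 1 by (simp add: susp_pt_def)
          then show ?thesis using z by force
        next
          case False
          then have "x = susp_pt (z,0)" using 1 by (simp add: susp_pt_def)
          then show ?thesis using z by force
        qed
      next
        case (2 p)
        then have "x = susp_pt p" by (auto simp: susp_pt_def)
        moreover have "p \<in> topspace (prod_topology Z (top_of_set {0..1}))"
          using 2 by auto
        ultimately show ?thesis by blast
      qed
    qed
  qed
  fix U assume "U \<subseteq> topspace (suspension Z)"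
  then show "openin (prod_topology Z (top_of_set {0..1}))
          {x \<in> topspace (prod_topology Z (top_of_set {0..1})). susp_pt x \<in> U} =
         openin (suspension Z) U"
    by (auto simp: openin_suspension SO_def topspace_suspension)
qed

section \<open>Geometry\<close>

definition supp :: "('x \<Rightarrow> real) \<Rightarrow> 'x set" where "supp f = {x. f x \<noteq> 0}"
definition lpart :: "('a + bool \<Rightarrow> real) \<Rightarrow> 'a \<Rightarrow> real" where "lpart f = (\<lambda>v. f (Inl v))"

lemma geom_iff: "f \<in> geom K \<longleftrightarrow> (\<forall>v. 0 \<le> f v) \<and> supp f \<in> K \<and> sum f (supp f) = 1"
  by (simp add: geom_def supp_def)

lemma cm_tos: "continuous_map (top_of_set S) (top_of_set T) g \<longleftrightarrow> continuous_on S g \<and> g ` S \<subseteq> T"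
  by (auto simp: continuous_map_in_subtopology)

lemma cont_app:
  "continuous_on S g \<Longrightarrow> continuous_on S (\<lambda>x. g x i)"
  by (rule continuous_on_product_then_coordinatewise)

lemma cont_coord [continuous_intros]:
  "continuous_on S (\<lambda>f::'x \<Rightarrow> real. f i)"
  by (rule cont_app[OF continuous_on_id])

lemma cont_snd_app [continuous_intros]:
  "continuous_on S (\<lambda>p::'y::topological_space \<times> ('x \<Rightarrow> real). snd p i)"
  by (rule cont_app[OF continuous_on_snd[OF continuous_on_id]])

lemma conv01:
  fixes l s r :: real
  assumes "0 \<le> l" "l \<le> 1" "0 \<le> s" "s \<le> 1" "0 \<le> r" "r \<le> 1"
  shows "0 \<le> l * s + (1 - l) * r" "l * s + (1 - l) * r \<le> 1"
proof -
  have "0 \<le> l * s" "0 \<le> (1 - l) * r" using assms by simp_all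
  then show "0 \<le> l * s + (1 - l) * r" by simp
  have "l * s \<le> l * 1" "(1 - l) * r \<le> (1 - l) * 1"
    using assms by (intro mult_left_mono; simp)+
  then show "l * s + (1 - l) * r \<le> 1" by simp
qed

lemma cont_fst_app [continuous_intros]:
  "continuous_on S (\<lambda>p::('x \<Rightarrow> real) \<times> 'y::topological_space. fst p i)"
  by (rule cont_app[OF continuous_on_fst[OF continuous_on_id]])

lemma supp_lpart: "{v. Inl v \<in> supp f} = supp (lpart f)"
  by (simp add: supp_def lpart_def)

lemma cxI_iff: "S \<in> cx_image Inl K \<longleftrightarrow> (\<forall>x\<in>S. x \<in> range Inl) \<and> {v. Inl v \<in> S} \<in> K"
proof
  assume "S \<in> cx_image Inl K"
  then obtain \<sigma> where "\<sigma> \<in> K" "S = Inl ` \<sigma>" by (auto simp: cx_image_def)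
  moreover have "{v. Inl v \<in> S} = \<sigma>" using \<open>S = Inl ` \<sigma>\<close> by auto
  ultimately show "(\<forall>x\<in>S. x \<in> range Inl) \<and> {v. Inl v \<in> S} \<in> K" by auto
next
  assume H: "(\<forall>x\<in>S. x \<in> range Inl) \<and> {v. Inl v \<in> S} \<in> K"
  then have "S = Inl ` {v. Inl v \<in> S}" by auto
  with H show "S \<in> cx_image Inl K" unfolding cx_image_def by (metis image_eqI)
qed

lemma cont_from_susp:
  assumes "h \<in> topspace (suspension Z) \<rightarrow> topspace W"
    and "continuous_map (prod_topology Z (top_of_set {0..1})) W (h \<circ> susp_pt)"
  shows "continuous_map (suspension Z) W h"
  unfolding continuous_map_def
proof (intro conjI allI impI)
  show "h \<in> topspace (suspension Z) \<rightarrow> topspace W" by fact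
  fix V assume V: "openin W V"
  let ?U = "{x \<in> topspace (suspension Z). h x \<in> V}"
  have e: "{p \<in> topspace Z \<times> {0..1}. susp_pt p \<in> ?U} =
     {p \<in> topspace (prod_topology Z (top_of_set {0..1})). (h \<circ> susp_pt) p \<in> V}"
  proof -
    have "susp_pt p \<in> topspace (suspension Z)" if "p \<in> topspace Z \<times> {0..1}" for p
      using continuous_map_image_subset_topspace[OF continuous_susp_pt[of Z]] that by auto
    then show ?thesis by auto
  qed
  have "openin (prod_topology Z (top_of_set {0..1}))
     {p \<in> topspace (prod_topology Z (top_of_set {0..1})). (h \<circ> susp_pt) p \<in> V}"
    using assms(2) V unfolding continuous_map_def by blast
  then have "SO Z ?U" unfolding SO_def e by (auto simp: topspace_suspension)
  then show "openin (suspension Z) ?U" by (simp add: openin_suspension)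
qed

locale SC =
  fixes X Y :: "'a set set"
  assumes fsc: "finite_simplicial_complex X" and sub: "subcomplex Y X"
begin

definition V where "V = \<Union>X"

lemma scX: "simplicial_complex X" and finX: "finite X"
  using fsc by (auto simp: finite_simplicial_complex_def)
lemma scY: "simplicial_complex Y" and YX: "Y \<subseteq> X"
  using sub by (auto simp: subcomplex_def)
lemma X_fin: "\<sigma> \<in> X \<Longrightarrow> finite \<sigma>"
  using scX unfolding simplicial_complex_def by blast
lemma X_ne: "\<sigma> \<in> X \<Longrightarrow> \<sigma> \<noteq> {}"
  using scX unfolding simplicial_complex_def by blast
lemma X_sub: "\<sigma> \<in> X \<Longrightarrow> \<tau> \<subseteq> \<sigma> \<Longrightarrow> \<tau> \<noteq> {} \<Longrightarrow> \<tau> \<in> X"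
  using scX unfolding simplicial_complex_def by blast
lemma Y_sub: "\<sigma> \<in> Y \<Longrightarrow> \<tau> \<subseteq> \<sigma> \<Longrightarrow> \<tau> \<noteq> {} \<Longrightarrow> \<tau> \<in> Y"
  using scY unfolding simplicial_complex_def by blast
lemma finV: "finite V" unfolding V_def using finX X_fin by (intro finite_Union) blast+
lemma X_V: "\<sigma> \<in> X \<Longrightarrow> \<sigma> \<subseteq> V" unfolding V_def by auto

lemma sum_supp_V: assumes "supp g \<subseteq> V" shows "sum g (supp g) = sum g V"
  by (rule sum.mono_neutral_left[OF finV assms]) (auto simp: supp_def)

lemma geomX_iff: "g \<in> geom X \<longleftrightarrow> (\<forall>v. 0 \<le> g v) \<and> supp g \<in> X \<and> sum g V = 1"
proof -
  have "supp g \<in> X \<Longrightarrow> sum g (supp g) = sum g V" using sum_supp_V X_V by blast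
  then show ?thesis unfolding geom_iff by auto
qed

lemma geomY_iff: "g \<in> geom Y \<longleftrightarrow> (\<forall>v. 0 \<le> g v) \<and> supp g \<in> Y \<and> sum g V = 1"
proof -
  have "supp g \<in> Y \<Longrightarrow> sum g (supp g) = sum g V" using sum_supp_V X_V YX by blast
  then show ?thesis unfolding geom_iff by auto
qed

lemma susp_cx_iff: "S \<in> susp_cx X \<longleftrightarrow> S \<noteq> {} \<and> \<not> (Inr True \<in> S \<and> Inr False \<in> S)
    \<and> ({v. Inl v \<in> S} \<in> X \<or> {v. Inl v \<in> S} = {})"
proof
  assume "S \<in> susp_cx X"
  then consider "S \<in> cx_image Inl X" | "S \<in> {insert (Inr b) (Inl ` \<sigma>) | \<sigma> b. \<sigma> \<in> X}"
    | "S \<in> {{Inr b} | b. True}"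
    unfolding susp_cx_def by blast
  then show "S \<noteq> {} \<and> \<not> (Inr True \<in> S \<and> Inr False \<in> S)
    \<and> ({v. Inl v \<in> S} \<in> X \<or> {v. Inl v \<in> S} = {})"
  proof cases
    case 1
    then obtain \<sigma> where s: "\<sigma> \<in> X" "S = Inl ` \<sigma>" unfolding cx_image_def by blast
    have e: "{v. Inl v \<in> S} = \<sigma>" using s(2) by blast
    have "\<sigma> \<noteq> {}" using X_ne s(1) by blast
    then have "S \<noteq> {}" using s(2) by blast
    moreover have "Inr True \<notin> S" using s(2) by blast
    ultimately show ?thesis using e s(1) by simp
  next
    case 2
    then obtain \<sigma> b where s: "\<sigma> \<in> X" "S = insert (Inr b) (Inl ` \<sigma>)" by blast
    have e: "{v. Inl v \<in> S} = \<sigma>" using s(2) by blast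
    have "\<not> (Inr True \<in> S \<and> Inr False \<in> S)" using s(2) by (cases b) blast+
    then show ?thesis using e s by simp
  next
    case 3
    then obtain b where s: "S = {Inr b}" by blast
    have e: "{v. Inl v \<in> S} = {}" using s by blast
    have "\<not> (Inr True \<in> S \<and> Inr False \<in> S)" using s by (cases b) blast+
    then show ?thesis using e s by simp
  qed
next
  assume H: "S \<noteq> {} \<and> \<not> (Inr True \<in> S \<and> Inr False \<in> S)
    \<and> ({v. Inl v \<in> S} \<in> X \<or> {v. Inl v \<in> S} = {})"
  define \<sigma> where "\<sigma> = {v. Inl v \<in> S}"
  have Seq: "S = Inl ` \<sigma> \<union> {x \<in> S. x = Inr True \<or> x = Inr False}"
  proof (rule set_eqI)
    fix x show "x \<in> S \<longleftrightarrow> x \<in> Inl ` \<sigma> \<union> {x \<in> S. x = Inr True \<or> x = Inr False}"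
    proof (cases x)
      case (Inl a) then show ?thesis by (simp add: \<sigma>_def image_iff)
    next
      case (Inr b) then show ?thesis by (cases b) auto
    qed
  qed
  have H1: "S \<noteq> {}" and H2: "\<not> (Inr True \<in> S \<and> Inr False \<in> S)"
    and H3: "\<sigma> \<in> X \<or> \<sigma> = {}" using H by (simp_all add: \<sigma>_def)
  consider (n) "Inr True \<notin> S" "Inr False \<notin> S" | (t) "Inr True \<in> S" "Inr False \<notin> S"
    | (f) "Inr False \<in> S" "Inr True \<notin> S" using H2 by blast
  then show "S \<in> susp_cx X"
  proof cases
    case n
    then have Se: "S = Inl ` \<sigma>" using Seq by blast
    then have "\<sigma> \<noteq> {}" using H1 by blast
    then have "\<sigma> \<in> X" using H3 by blast
    then have "S \<in> cx_image Inl X" unfolding cx_image_def using Se by blast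
    then show ?thesis unfolding susp_cx_def by blast
  next
    case t
    then have Se: "S = insert (Inr True) (Inl ` \<sigma>)" using Seq by blast
    show ?thesis
    proof (cases "\<sigma> = {}")
      case True
      then have "S \<in> {{Inr b} | b. True}" using Se by blast
      then show ?thesis unfolding susp_cx_def by blast
    next
      case False
      then have "\<sigma> \<in> X" using H3 by blast
      then have "S \<in> {insert (Inr b) (Inl ` \<sigma>) | \<sigma> b. \<sigma> \<in> X}" using Se by blast
      then show ?thesis unfolding susp_cx_def by blast
    qed
  next
    case f
    then have Se: "S = insert (Inr False) (Inl ` \<sigma>)" using Seq by blast
    show ?thesis
    proof (cases "\<sigma> = {}")
      case True
      then have "S \<in> {{Inr b} | b. True}" using Se by blast
      then show ?thesis unfolding susp_cx_def by blast
    next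
      case False
      then have "\<sigma> \<in> X" using H3 by blast
      then have "S \<in> {insert (Inr b) (Inl ` \<sigma>) | \<sigma> b. \<sigma> \<in> X}" using Se by blast
      then show ?thesis unfolding susp_cx_def by blast
    qed
  qed
qed

lemma sum_f:
  assumes "supp (lpart f) \<subseteq> V"
  shows "finite (supp f)"
    and "sum f (supp f) = sum (lpart f) V + f (Inr True) + f (Inr False)"
proof -
  define W where "W = Inl ` V \<union> {Inr True, Inr False}"
  have sW: "supp f \<subseteq> W"
  proof
    fix x assume "x \<in> supp f"
    then show "x \<in> W" using assms unfolding W_def
      by (cases x) (auto simp: supp_def lpart_def)
  qed
  have fW: "finite W" using finV by (simp add: W_def)
  then show "finite (supp f)" using sW finite_subset by blast
  have "sum f (supp f) = sum f W"
    by (rule sum.mono_neutral_left[OF fW sW]) (auto simp: supp_def)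
  also have "\<dots> = sum f (Inl ` V) + sum f {Inr True, Inr False}"
    unfolding W_def by (rule sum.union_disjoint) (auto simp: finV)
  also have "sum f (Inl ` V) = sum (lpart f) V"
    by (simp add: sum.reindex lpart_def)
  also have "sum f {Inr True, Inr False} = f (Inr True) + f (Inr False)"
    by simp
  finally show "sum f (supp f) = sum (lpart f) V + f (Inr True) + f (Inr False)"
    by simp
qed

lemma geomS_iff: "f \<in> geom (susp_cx X) \<longleftrightarrow> (\<forall>x. 0 \<le> f x) \<and> (f (Inr True) = 0 \<or> f (Inr False) = 0)
   \<and> (supp (lpart f) \<in> X \<or> supp (lpart f) = {}) \<and> sum (lpart f) V + f (Inr True) + f (Inr False) = 1"
proof -
  have Inr: "Inr b \<in> supp f \<longleftrightarrow> f (Inr b) \<noteq> 0" for b by (simp add: supp_def)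
  show ?thesis
  proof
    assume H: "f \<in> geom (susp_cx X)"
    then have S: "supp f \<in> susp_cx X" and s1: "sum f (supp f) = 1" and nn: "\<forall>x. 0 \<le> f x"
      by (auto simp: geom_iff)
    then have L: "supp (lpart f) \<in> X \<or> supp (lpart f) = {}"
      and B: "f (Inr True) = 0 \<or> f (Inr False) = 0"
      unfolding susp_cx_iff supp_lpart Inr by auto
    then have "supp (lpart f) \<subseteq> V" using X_V by auto
    from sum_f(2)[OF this] s1 L B nn show "(\<forall>x. 0 \<le> f x) \<and> (f (Inr True) = 0 \<or> f (Inr False) = 0)
   \<and> (supp (lpart f) \<in> X \<or> supp (lpart f) = {}) \<and> sum (lpart f) V + f (Inr True) + f (Inr False) = 1"
      by simp
  next
    assume H: "(\<forall>x. 0 \<le> f x) \<and> (f (Inr True) = 0 \<or> f (Inr False) = 0)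
   \<and> (supp (lpart f) \<in> X \<or> supp (lpart f) = {}) \<and> sum (lpart f) V + f (Inr True) + f (Inr False) = 1"
    then have "supp (lpart f) \<subseteq> V" using X_V by auto
    from sum_f(2)[OF this] H have s1: "sum f (supp f) = 1" by simp
    then have "supp f \<noteq> {}" by auto
    with H have "supp f \<in> susp_cx X"
      unfolding susp_cx_iff supp_lpart Inr by auto
    with s1 H show "f \<in> geom (susp_cx X)" by (simp add: geom_iff)
  qed
qed

lemma geomIY_iff:
  assumes "f \<in> geom (susp_cx X)"
  shows "f \<in> geom (cx_image Inl Y) \<longleftrightarrow> f (Inr True) = 0 \<and> f (Inr False) = 0 \<and> supp (lpart f) \<in> Y"
proof -
  have "(\<forall>x\<in>supp f. x \<in> range Inl) \<longleftrightarrow> f (Inr True) = 0 \<and> f (Inr False) = 0"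
  proof
    assume "\<forall>x\<in>supp f. x \<in> range Inl"
    then show "f (Inr True) = 0 \<and> f (Inr False) = 0" by (auto simp: supp_def)
  next
    assume "f (Inr True) = 0 \<and> f (Inr False) = 0"
    then have "f (Inr b) = 0" for b by (cases b) auto
    then show "\<forall>x\<in>supp f. x \<in> range Inl"
      by (metis (mono_tags) CollectD rangeI sumE supp_def)
  qed
  then show ?thesis using assms unfolding geom_iff cxI_iff supp_lpart by auto
qed

definition T where "T = geom (susp_cx X) - geom (cx_image Inl Y)"
definition Zs where "Zs = geom X - geom Y"

lemma T_iff: "f \<in> T \<longleftrightarrow> ((\<forall>x. 0 \<le> f x) \<and> (f (Inr True) = 0 \<or> f (Inr False) = 0)
   \<and> (supp (lpart f) \<in> X \<or> supp (lpart f) = {}) \<and> sum (lpart f) V + f (Inr True) + f (Inr False) = 1)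
   \<and> \<not> (f (Inr True) = 0 \<and> f (Inr False) = 0 \<and> supp (lpart f) \<in> Y)"
  unfolding T_def using geomIY_iff geomS_iff by blast

lemma Zs_iff: "g \<in> Zs \<longleftrightarrow> (\<forall>v. 0 \<le> g v) \<and> supp g \<in> X - Y \<and> sum g V = 1"
  unfolding Zs_def Diff_iff geomX_iff geomY_iff by auto

definition PP :: "('a \<Rightarrow> real) \<Rightarrow> real" where "PP u = (\<Sum>\<tau>\<in>X-Y. \<Prod>v\<in>\<tau>. u v)"

lemma PP_nonneg: "(\<forall>v. 0 \<le> u v) \<Longrightarrow> 0 \<le> PP u"
  unfolding PP_def by (intro sum_nonneg prod_nonneg) auto

lemma prod_pos_iff:
  assumes "finite \<tau>" "\<forall>v. 0 \<le> u v"
  shows "0 < prod u \<tau> \<longleftrightarrow> \<tau> \<subseteq> supp u"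
proof
  assume "0 < prod u \<tau>"
  then have "prod u \<tau> \<noteq> 0" by simp
  then show "\<tau> \<subseteq> supp u" using assms(1) by (auto simp: supp_def prod_zero_iff)
next
  assume "\<tau> \<subseteq> supp u"
  then have "\<forall>v\<in>\<tau>. 0 < u v" using assms(2) by (force simp: supp_def less_le)
  then show "0 < prod u \<tau>" by (intro prod_pos) blast
qed

lemma PP_pos:
  assumes nn: "\<forall>v. 0 \<le> u v" and S: "supp u \<in> X \<or> supp u = {}"
  shows "0 < PP u \<longleftrightarrow> supp u \<in> X - Y"
proof -
  have fin: "finite (X - Y)" using finX by simp
  have "0 < PP u \<longleftrightarrow> (\<exists>\<tau>\<in>X-Y. 0 < prod u \<tau>)"
  proof
    assume "0 < PP u"
    show "\<exists>\<tau>\<in>X-Y. 0 < prod u \<tau>"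
    proof (rule ccontr)
      assume "\<not> (\<exists>\<tau>\<in>X-Y. 0 < prod u \<tau>)"
      then have "PP u \<le> 0" unfolding PP_def by (intro sum_nonpos) (meson DiffI not_less)
      with \<open>0 < PP u\<close> show False by simp
    qed
  next
    assume "\<exists>\<tau>\<in>X-Y. 0 < prod u \<tau>"
    then obtain \<tau> where "\<tau> \<in> X - Y" "0 < prod u \<tau>" by blast
    then show "0 < PP u" unfolding PP_def
      using fin nn by (intro sum_pos2[of _ \<tau>]) (auto intro: prod_nonneg)
  qed
  also have "\<dots> \<longleftrightarrow> (\<exists>\<tau>\<in>X-Y. \<tau> \<subseteq> supp u)"
    using prod_pos_iff[OF _ nn] X_fin by auto
  also have "\<dots> \<longleftrightarrow> supp u \<in> X - Y"
  proof
    assume "\<exists>\<tau>\<in>X-Y. \<tau> \<subseteq> supp u"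
    then obtain \<tau> where t: "\<tau> \<in> X - Y" "\<tau> \<subseteq> supp u" by blast
    then have "supp u \<noteq> {}" using X_ne by auto
    then have "supp u \<in> X" using S by auto
    moreover have "supp u \<notin> Y" using t Y_sub X_ne by blast
    ultimately show "supp u \<in> X - Y" by simp
  qed auto
  finally show ?thesis .
qed

lemma PP_zero: "supp u = {} \<Longrightarrow> PP u = 0"
  unfolding PP_def
proof (intro sum.neutral ballI)
  fix \<tau> assume "supp u = {}" "\<tau> \<in> X - Y"
  then obtain v where "v \<in> \<tau>" using X_ne by blast
  moreover have "u v = 0" using \<open>supp u = {}\<close> by (auto simp: supp_def)
  ultimately show "prod u \<tau> = 0" using X_fin \<open>\<tau> \<in> X - Y\<close> by (meson DiffD1 prod_zero_iff)
qed

lemma PP_cont [continuous_intros]: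
  "continuous_on S (\<lambda>f. PP (lpart f))"
  unfolding PP_def lpart_def by (intro continuous_intros)

lemma T_nonneg: "f \<in> T \<Longrightarrow> 0 \<le> f x"
  using T_iff by blast

lemma T_lpart_nonneg: "f \<in> T \<Longrightarrow> \<forall>v. 0 \<le> lpart f v"
  using T_iff by (simp add: lpart_def)

lemma sum_zero_supp:
  assumes "\<forall>v. 0 \<le> u v" "supp u \<subseteq> V" "sum u V \<le> 0"
  shows "supp u = {}"
proof -
  have "sum u V = 0" using assms(1,3) by (meson antisym sum_nonneg)
  then have "\<forall>v\<in>V. u v = 0" using sum_nonneg_eq_0_iff[OF finV] assms(1) by blast
  then show ?thesis using assms(2) by (auto simp: supp_def)
qed

lemma T_max_pos:
  assumes "f \<in> T"
  shows "0 < max (PP (lpart f)) (f (Inr True) + f (Inr False))"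
proof (cases "f (Inr True) + f (Inr False) > 0")
  case True then show ?thesis by simp
next
  case False
  have a: "0 \<le> f (Inr True)" "0 \<le> f (Inr False)" using T_nonneg[OF assms] by auto
  with False have z: "f (Inr True) = 0" "f (Inr False) = 0" by auto
  have nn: "\<forall>v. 0 \<le> lpart f v" using T_lpart_nonneg[OF assms] .
  have H: "supp (lpart f) \<in> X \<or> supp (lpart f) = {}" "sum (lpart f) V = 1"
    "supp (lpart f) \<notin> Y"
    using assms z unfolding T_iff by auto
  have "supp (lpart f) \<noteq> {}"
  proof
    assume e: "supp (lpart f) = {}"
    then have "\<forall>v. lpart f v = 0" by (auto simp: supp_def)
    then have "sum (lpart f) V = 0" by simp
    with H show False by simp
  qed
  with H have "supp (lpart f) \<in> X - Y" by auto
  then have "0 < PP (lpart f)" using PP_pos[OF nn] H by blast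
  then show ?thesis by simp
qed

definition sig :: "('a + bool \<Rightarrow> real) \<Rightarrow> real" where
  "sig f = 1/2 + (f (Inr True) - f (Inr False)) / (2 * max (PP (lpart f)) (f (Inr True) + f (Inr False)))"

definition Gm :: "('a + bool \<Rightarrow> real) \<Rightarrow> ('a \<Rightarrow> real) \<times> real" where
  "Gm f = ((\<lambda>v. f (Inl v) / (1 - f (Inr True) - f (Inr False))), sig f)"

definition psi :: "('a + bool \<Rightarrow> real) \<Rightarrow> bool + (('a \<Rightarrow> real) \<times> real)" where
  "psi f = susp_pt (Gm f)"

definition Fm :: "('a \<Rightarrow> real) \<times> real \<Rightarrow> 'a + bool \<Rightarrow> real" where
  "Fm p = (\<lambda>x. case x of Inl v \<Rightarrow> (1 - \<bar>2 * snd p - 1\<bar>) * fst p v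
                     | Inr b \<Rightarrow> (if b then max 0 (2 * snd p - 1) else max 0 (1 - 2 * snd p)))"

definition delta :: "bool \<Rightarrow> 'a + bool \<Rightarrow> real" where
  "delta b = (\<lambda>x. if x = Inr b then 1 else 0)"

definition phi :: "bool + (('a \<Rightarrow> real) \<times> real) \<Rightarrow> 'a + bool \<Rightarrow> real" where
  "phi x = (case x of Inl b \<Rightarrow> delta b | Inr p \<Rightarrow> Fm p)"

lemma sig_range:
  assumes "f \<in> T" shows "0 \<le> sig f" "sig f \<le> 1"
proof -
  let ?a = "f (Inr True)" and ?c = "f (Inr False)" and ?M = "max (PP (lpart f)) (f (Inr True) + f (Inr False))"
  have M: "0 < ?M" by (rule T_max_pos[OF assms])
  have "0 \<le> ?a" "0 \<le> ?c" using T_nonneg[OF assms] by auto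
  then have "\<bar>?a - ?c\<bar> \<le> ?M" by auto
  then have "\<bar>(?a - ?c) / (2 * ?M)\<bar> \<le> 1/2" using M by (simp add: abs_divide)
  then show "0 \<le> sig f" "sig f \<le> 1" unfolding sig_def by linarith+
qed

lemma sig_cont: "continuous_on T sig"
  unfolding sig_def
  by (intro continuous_intros) (use T_max_pos in force)

lemma Fm_cont: "continuous_on S Fm"
proof (rule continuous_on_coordinatewise_then_product)
  fix x show "continuous_on S (\<lambda>p. Fm p x)"
  proof (cases x)
    case (Inl v)
    then show ?thesis unfolding Fm_def by (simp; intro continuous_intros)
  next
    case (Inr b)
    then show ?thesis unfolding Fm_def by (cases b; simp; intro continuous_intros)
  qed
qed

lemma Fm_T:
  assumes "fst p \<in> Zs" "snd p \<in> {0..1}"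
  shows "Fm p \<in> T"
proof -
  obtain g s where p: "p = (g, s)" by (cases p)
  have g: "\<forall>v. 0 \<le> g v" "supp g \<in> X - Y" "sum g V = 1" using assms(1) p Zs_iff by auto
  have s: "0 \<le> s" "s \<le> 1" using assms(2) p by auto
  define t where "t = \<bar>2 * s - 1\<bar>"
  have t: "0 \<le> t" "t \<le> 1" using s t_def by auto
  have F: "Fm p (Inl v) = (1 - t) * g v" for v by (simp add: Fm_def p t_def)
  have FT: "Fm p (Inr True) = max 0 (2 * s - 1)" and FF: "Fm p (Inr False) = max 0 (1 - 2 * s)"
    by (simp_all add: Fm_def p)
  have lp: "lpart (Fm p) = (\<lambda>v. (1 - t) * g v)" by (simp add: lpart_def F)
  have nn: "0 \<le> Fm p x" for x
  proof (cases x)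
    case (Inl v) then show ?thesis using F g t by simp
  next
    case (Inr b) then show ?thesis by (cases b) (simp_all add: FT FF)
  qed
  have supp_l: "supp (lpart (Fm p)) = (if t = 1 then {} else supp g)"
    using t by (auto simp: lp supp_def)
  have sum_l: "sum (lpart (Fm p)) V = 1 - t"
    by (simp add: lp sum_distrib_left[symmetric] g(3))
  have tsum: "max 0 (2 * s - 1) + max 0 (1 - 2 * s) = t" unfolding t_def by auto
  show ?thesis unfolding T_iff
  proof (intro conjI)
    show "\<forall>x. 0 \<le> Fm p x" using nn by blast
    show "Fm p (Inr True) = 0 \<or> Fm p (Inr False) = 0" unfolding FT FF by auto
    show "supp (lpart (Fm p)) \<in> X \<or> supp (lpart (Fm p)) = {}" using supp_l g(2) by auto
    show "sum (lpart (Fm p)) V + Fm p (Inr True) + Fm p (Inr False) = 1"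
      using sum_l tsum FT FF by simp
    show "\<not> (Fm p (Inr True) = 0 \<and> Fm p (Inr False) = 0 \<and> supp (lpart (Fm p)) \<in> Y)"
    proof
      assume H: "Fm p (Inr True) = 0 \<and> Fm p (Inr False) = 0 \<and> supp (lpart (Fm p)) \<in> Y"
      then have "t = 0" using tsum FT FF by simp
      then have "supp (lpart (Fm p)) = supp g" using supp_l by simp
      then show False using H g(2) by simp
    qed
  qed
qed

lemma delta_Fm: "s = 1 \<Longrightarrow> Fm (g, s) = delta True" "s = 0 \<Longrightarrow> Fm (g, s) = delta False"
  by (auto simp: Fm_def delta_def fun_eq_iff split: sum.split)

lemma phi_susp: "snd p \<in> {0..1} \<Longrightarrow> phi (susp_pt p) = Fm p"
  by (cases p) (auto simp: susp_pt_def phi_def delta_Fm)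

lemma delta_T: "delta b \<in> T"
proof -
  have l: "lpart (delta b) = (\<lambda>v. 0)" by (simp add: lpart_def delta_def)
  have s: "supp (lpart (delta b)) = {}" by (simp add: l supp_def)
  show ?thesis unfolding T_iff l
    by (cases b) (simp_all add: delta_def supp_def)
qed

lemma phi_cont: "continuous_map (suspension (top_of_set Zs)) (top_of_set T) phi"
proof (rule cont_from_susp)
  show "phi \<in> topspace (suspension (top_of_set Zs)) \<rightarrow> topspace (top_of_set T)"
  proof
    fix x assume "x \<in> topspace (suspension (top_of_set Zs))"
    then consider b where "x = Inl b" | p where "p \<in> Zs \<times> {0<..<1}" "x = Inr p"
      by (auto simp: topspace_suspension)
    then show "phi x \<in> topspace (top_of_set T)"
    proof cases
      case 1 then show ?thesis using delta_T by (simp add: phi_def)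
    next
      case 2 then show ?thesis using Fm_T[of p] by (auto simp: phi_def)
    qed
  qed
  have "continuous_map (top_of_set (Zs \<times> {0..1})) (top_of_set T) Fm"
    unfolding cm_tos using Fm_cont Fm_T by auto
  then have "continuous_map (prod_topology (top_of_set Zs) (top_of_set {0..1})) (top_of_set T) Fm"
    by simp
  then show "continuous_map (prod_topology (top_of_set Zs) (top_of_set {0..1})) (top_of_set T) (phi \<circ> susp_pt)"
    by (rule continuous_map_eq) (auto simp: phi_susp)
qed

lemma openin_T_less:
  fixes g h :: "('a + bool \<Rightarrow> real) \<Rightarrow> real"
  assumes "continuous_on T g" "continuous_on T h"
  shows "openin (top_of_set T) {f \<in> T. g f < h f}"
proof -
  have "openin (top_of_set T) (T \<inter> (\<lambda>f. h f - g f) -` {0<..})"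
    by (intro continuous_openin_preimage_gen continuous_intros assms open_greaterThan)
  moreover have "T \<inter> (\<lambda>f. h f - g f) -` {0<..} = {f \<in> T. g f < h f}" by auto
  ultimately show ?thesis by simp
qed

lemma psi_N:
  assumes "f \<in> T" "PP (lpart f) < f (Inr True)"
  shows "psi f = Inl True"
proof -
  have "0 \<le> PP (lpart f)" using PP_nonneg T_lpart_nonneg assms(1) by blast
  then have a: "0 < f (Inr True)" using assms(2) by linarith
  then have c: "f (Inr False) = 0" using assms(1) unfolding T_iff by auto
  have "max (PP (lpart f)) (f (Inr True) + f (Inr False)) = f (Inr True)" using c assms(2) by simp
  then have "sig f = 1" unfolding sig_def using a c by simp
  then show ?thesis by (simp add: psi_def Gm_def susp_pt_def)
qed

lemma psi_S:
  assumes "f \<in> T" "PP (lpart f) < f (Inr False)"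
  shows "psi f = Inl False"
proof -
  have "0 \<le> PP (lpart f)" using PP_nonneg T_lpart_nonneg assms(1) by blast
  then have a: "0 < f (Inr False)" using assms(2) by linarith
  then have c: "f (Inr True) = 0" using assms(1) unfolding T_iff by auto
  have "max (PP (lpart f)) (f (Inr True) + f (Inr False)) = f (Inr False)" using c assms(2) by simp
  then have "sig f = 0" unfolding sig_def using a c by simp
  then show ?thesis by (simp add: psi_def Gm_def susp_pt_def)
qed

lemma Gm_O1:
  assumes "f \<in> T" "0 < PP (lpart f)" "f (Inr True) + f (Inr False) < 1"
  shows "Gm f \<in> Zs \<times> {0..1}"
proof -
  define d where "d = 1 - f (Inr True) - f (Inr False)"
  have d: "0 < d" using assms(3) d_def by simp
  have nn: "\<forall>v. 0 \<le> lpart f v" using T_lpart_nonneg[OF assms(1)] .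
  have H: "supp (lpart f) \<in> X \<or> supp (lpart f) = {}" "sum (lpart f) V = d"
    using assms(1) unfolding T_iff d_def by auto
  have X: "supp (lpart f) \<in> X - Y" using PP_pos[OF nn H(1)] assms(2) by blast
  define g where "g = (\<lambda>v. f (Inl v) / d)"
  have fstG: "fst (Gm f) = g" by (simp add: Gm_def g_def d_def)
  have "g \<in> Zs" unfolding Zs_iff
  proof (intro conjI)
    show "\<forall>v. 0 \<le> g v" using nn d by (simp add: g_def lpart_def)
    have "supp g = supp (lpart f)" using d by (simp add: supp_def g_def lpart_def)
    then show "supp g \<in> X - Y" using X by simp
    have "sum g V = sum (lpart f) V / d" by (simp add: g_def lpart_def sum_divide_distrib)
    then show "sum g V = 1" using H(2) d by simp
  qed
  moreover have "snd (Gm f) \<in> {0..1}" using sig_range[OF assms(1)] by (simp add: Gm_def)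
  ultimately show ?thesis using fstG by (metis mem_Times_iff)
qed

lemma Gm_cont:
  assumes "WW \<subseteq> T" "\<And>f. f \<in> WW \<Longrightarrow> f (Inr True) + f (Inr False) < 1"
  shows "continuous_on WW Gm"
  unfolding Gm_def
proof (intro continuous_on_Pair)
  show "continuous_on WW sig" using sig_cont assms(1) continuous_on_subset by blast
  show "continuous_on WW (\<lambda>f v. f (Inl v) / (1 - f (Inr True) - f (Inr False)))"
  proof (rule continuous_on_coordinatewise_then_product)
    fix v show "continuous_on WW (\<lambda>f. f (Inl v) / (1 - f (Inr True) - f (Inr False)))"
      by (intro continuous_intros) (use assms(2) in force)
  qed
qed

lemma T_cover:
  assumes "f \<in> T"
  shows "PP (lpart f) < f (Inr True) \<or> PP (lpart f) < f (Inr False) \<or>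
         (0 < PP (lpart f) \<and> f (Inr True) + f (Inr False) < 1)"
proof (rule ccontr)
  assume H: "\<not> ?thesis"
  have nn: "\<forall>v. 0 \<le> lpart f v" using T_lpart_nonneg[OF assms] .
  have a: "0 \<le> f (Inr True)" "0 \<le> f (Inr False)" using T_nonneg[OF assms] by auto
  have M: "0 < max (PP (lpart f)) (f (Inr True) + f (Inr False))" using T_max_pos[OF assms] .
  have S: "supp (lpart f) \<in> X \<or> supp (lpart f) = {}" "sum (lpart f) V + f (Inr True) + f (Inr False) = 1"
    using assms unfolding T_iff by auto
  have P: "0 < PP (lpart f)"
  proof (rule ccontr)
    assume "\<not> 0 < PP (lpart f)"
    then have "PP (lpart f) \<le> 0" by simp
    then have "f (Inr True) \<le> 0" "f (Inr False) \<le> 0" using H by auto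
    then show False using M \<open>PP (lpart f) \<le> 0\<close> by simp
  qed
  with H have "1 \<le> f (Inr True) + f (Inr False)" by auto
  then have "sum (lpart f) V \<le> 0" using S(2) by simp
  moreover have "supp (lpart f) \<subseteq> V" using S(1) X_V by auto
  ultimately have "supp (lpart f) = {}" using sum_zero_supp nn by blast
  then have "PP (lpart f) = 0" by (rule PP_zero)
  with P show False by simp
qed

lemma psi_cont: "continuous_map (top_of_set T) (suspension (top_of_set Zs)) psi"
proof -
  define ON where "ON = {f \<in> T. PP (lpart f) < f (Inr True)}"
  define OS where "OS = {f \<in> T. PP (lpart f) < f (Inr False)}"
  define O1 where "O1 = {f \<in> T. 0 < PP (lpart f)} \<inter> {f \<in> T. f (Inr True) + f (Inr False) < 1}"
  define Oi where "Oi = (\<lambda>i::nat. if i = 0 then ON else if i = 1 then OS else O1)"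
  have oN: "openin (top_of_set T) ON" unfolding ON_def
    by (intro openin_T_less PP_cont cont_coord)
  have oS: "openin (top_of_set T) OS" unfolding OS_def
    by (intro openin_T_less PP_cont cont_coord)
  have o1: "openin (top_of_set T) O1" unfolding O1_def
    by (intro openin_Int openin_T_less PP_cont cont_coord continuous_on_const continuous_on_add)
  have sub: "ON \<subseteq> T" "OS \<subseteq> T" "O1 \<subseteq> T" unfolding ON_def OS_def O1_def by blast+
  have cN: "continuous_map (subtopology (top_of_set T) ON) (suspension (top_of_set Zs)) psi"
  proof -
    have "continuous_map (subtopology (top_of_set T) ON) (suspension (top_of_set Zs)) (\<lambda>x. Inl True)"
      by (auto simp: topspace_suspension)
    then show ?thesis
    proof (rule continuous_map_eq)
      fix x assume "x \<in> topspace (subtopology (top_of_set T) ON)"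
      then have "x \<in> ON" by simp
      then show "Inl True = psi x" unfolding ON_def using psi_N by simp
    qed
  qed
  have cS: "continuous_map (subtopology (top_of_set T) OS) (suspension (top_of_set Zs)) psi"
  proof -
    have "continuous_map (subtopology (top_of_set T) OS) (suspension (top_of_set Zs)) (\<lambda>x. Inl False)"
      by (auto simp: topspace_suspension)
    then show ?thesis
    proof (rule continuous_map_eq)
      fix x assume "x \<in> topspace (subtopology (top_of_set T) OS)"
      then have "x \<in> OS" by simp
      then show "Inl False = psi x" unfolding OS_def using psi_S by simp
    qed
  qed
  have c1: "continuous_map (subtopology (top_of_set T) O1) (suspension (top_of_set Zs)) psi"
  proof -
    have st: "subtopology (top_of_set T) O1 = top_of_set O1"
      using sub by (simp add: subtopology_subtopology Int_absorb1)
    have "continuous_map (top_of_set O1) (top_of_set (Zs \<times> {0..1})) Gm"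
      unfolding cm_tos
    proof
      show "continuous_on O1 Gm" using sub(3) by (rule Gm_cont) (simp add: O1_def)
      show "Gm ` O1 \<subseteq> Zs \<times> {0..1}" unfolding O1_def using Gm_O1 by blast
    qed
    then have "continuous_map (top_of_set O1) (prod_topology (top_of_set Zs) (top_of_set {0..1})) Gm"
      by simp
    then have "continuous_map (top_of_set O1) (suspension (top_of_set Zs)) (susp_pt \<circ> Gm)"
      using continuous_susp_pt by (rule continuous_map_compose)
    moreover have "susp_pt \<circ> Gm = psi" by (simp add: psi_def fun_eq_iff)
    ultimately show ?thesis unfolding st by simp
  qed
  show ?thesis
  proof (rule pasting_lemma[where I = "{0,1,2}" and T = Oi and f = "\<lambda>i. psi"])
    fix i assume i: "i \<in> {0::nat,1,2}"
    then consider "i = 0" | "i = 1" | "i = 2" by blast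
    then show "openin (top_of_set T) (Oi i)"
      by cases (simp_all add: Oi_def oN oS o1)
    from i consider "i = 0" | "i = 1" | "i = 2" by blast
    then show "continuous_map (subtopology (top_of_set T) (Oi i)) (suspension (top_of_set Zs)) psi"
      by cases (simp_all add: Oi_def cN cS c1)
  next
    fix x assume "x \<in> topspace (top_of_set T)"
    then have x: "x \<in> T" by simp
    then have "x \<in> ON \<or> x \<in> OS \<or> x \<in> O1" using T_cover[OF x] unfolding ON_def OS_def O1_def by blast
    then have "x \<in> Oi 0 \<or> x \<in> Oi 1 \<or> x \<in> Oi 2" unfolding Oi_def by simp
    then show "\<exists>j. j \<in> {0::nat,1,2} \<and> x \<in> Oi j \<and> psi x = psi x"
      by blast
  next
    fix i j x show "psi x = psi x" by (rule refl)
  qed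
qed

lemma sig_delta: "sig (delta True) = 1" "sig (delta False) = 0"
proof -
  have l: "lpart (delta b) = (\<lambda>v. 0)" for b by (simp add: lpart_def delta_def)
  have "PP (lpart (delta b)) = 0" for b by (rule PP_zero) (simp add: l supp_def)
  then show "sig (delta True) = 1" "sig (delta False) = 0"
    by (simp_all add: sig_def delta_def)
qed

lemma psi_delta: "psi (delta b) = Inl b"
proof -
  have l: "lpart (delta b) = (\<lambda>v. 0)" by (simp add: lpart_def delta_def)
  have P: "PP (lpart (delta b)) = 0" by (rule PP_zero) (simp add: l supp_def)
  show ?thesis
  proof (cases b)
    case True
    then show ?thesis using psi_N[OF delta_T] P by (simp add: delta_def)
  next
    case False
    then show ?thesis using psi_S[OF delta_T] P by (simp add: delta_def)
  qed
qed

lemma divpos: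
  fixes x d :: real assumes "0 < d"
  shows "0 < x / d \<longleftrightarrow> 0 < x" "x / d < 0 \<longleftrightarrow> x < 0"
  using assms by (simp_all add: zero_less_divide_iff divide_less_0_iff)

lemma supp_phipsi:
  assumes f: "f \<in> T"
  shows "supp (phi (psi f)) \<subseteq> supp f"
proof -
  let ?a = "f (Inr True)" and ?c = "f (Inr False)"
  let ?M = "max (PP (lpart f)) (f (Inr True) + f (Inr False))"
  have M: "0 < ?M" by (rule T_max_pos[OF f])
  have ac: "0 \<le> ?a" "0 \<le> ?c" using T_nonneg[OF f] by auto
  have key: "sig f - 1/2 = (?a - ?c) / (2 * ?M)" by (simp add: sig_def)
  have d: "0 < 2 * ?M" using M by simp
  have pos: "0 < sig f - 1/2 \<longleftrightarrow> 0 < ?a - ?c" unfolding key by (rule divpos(1)[OF d])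
  have neg: "sig f - 1/2 < 0 \<longleftrightarrow> ?a - ?c < 0" unfolding key by (rule divpos(2)[OF d])
  show ?thesis
  proof (cases "sig f = 1")
    case True
    then have "psi f = Inl True" by (simp add: psi_def Gm_def susp_pt_def)
    moreover have "?a \<noteq> 0" using True pos ac by auto
    ultimately show ?thesis by (auto simp: phi_def delta_def supp_def)
  next
    case F1: False
    show ?thesis
    proof (cases "sig f = 0")
      case True
      then have "psi f = Inl False" by (simp add: psi_def Gm_def susp_pt_def)
      moreover have "?c \<noteq> 0" using True neg ac by auto
      ultimately show ?thesis by (auto simp: phi_def delta_def supp_def)
    next
      case False
      then have "psi f = Inr (Gm f)" using F1 by (simp add: psi_def Gm_def susp_pt_def)
      then have e: "phi (psi f) = Fm (Gm f)" by (simp add: phi_def)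
      show ?thesis
      proof
        fix x assume x: "x \<in> supp (phi (psi f))"
        show "x \<in> supp f"
        proof (cases x)
          case (Inl v)
          then show ?thesis using x by (auto simp: e supp_def Fm_def Gm_def)
        next
          case (Inr b)
          show ?thesis
          proof (cases b)
            case True
            then have "max 0 (2 * sig f - 1) \<noteq> 0" using x Inr by (simp add: e supp_def Fm_def Gm_def)
            then have "0 < sig f - 1/2" by linarith
            then have "?a \<noteq> 0" using pos ac by auto
            then show ?thesis using Inr True by (simp add: supp_def)
          next
            case False
            then have "max 0 (1 - 2 * sig f) \<noteq> 0" using x Inr by (simp add: e supp_def Fm_def Gm_def)
            then have "sig f - 1/2 < 0" by linarith
            then have "?c \<noteq> 0" using neg ac by auto
            then show ?thesis using Inr False by (simp add: supp_def)
          qed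
        qed
      qed
    qed
  qed
qed

lemma comb_T:
  assumes f: "f \<in> T" and h: "h \<in> T" and sh: "supp h \<subseteq> supp f" and l: "0 \<le> l" "l \<le> 1"
  shows "(\<lambda>x. l * f x + (1 - l) * h x) \<in> T"
proof (cases "l = 0")
  case True
  then show ?thesis using h by simp
next
  case False
  then have l0: "0 < l" using l by simp
  define k where "k = (\<lambda>x. l * f x + (1 - l) * h x)"
  have nn: "0 \<le> k x" for x using T_nonneg[OF f] T_nonneg[OF h] l by (simp add: k_def)
  have zk: "k x = 0 \<longleftrightarrow> f x = 0" for x
  proof
    assume "f x = 0"
    then have "h x = 0" using sh by (auto simp: supp_def)
    then show "k x = 0" using \<open>f x = 0\<close> by (simp add: k_def)
  next
    assume k0: "k x = 0"
    show "f x = 0"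
    proof (rule ccontr)
      assume "f x \<noteq> 0"
      then have "0 < f x" using T_nonneg[OF f, of x] by simp
      then have "0 < l * f x" using l0 by simp
      moreover have "0 \<le> (1 - l) * h x" using T_nonneg[OF h, of x] l by simp
      ultimately have "0 < k x" by (simp add: k_def)
      with k0 show False by simp
    qed
  qed
  have sl: "supp (lpart k) = supp (lpart f)" using zk by (simp add: supp_def lpart_def)
  have Hf: "supp (lpart f) \<in> X \<or> supp (lpart f) = {}" "sum (lpart f) V + f (Inr True) + f (Inr False) = 1"
    "\<not> (f (Inr True) = 0 \<and> f (Inr False) = 0 \<and> supp (lpart f) \<in> Y)" "f (Inr True) = 0 \<or> f (Inr False) = 0"
    using f unfolding T_iff by blast+
  have Hh: "sum (lpart h) V + h (Inr True) + h (Inr False) = 1"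
    using h unfolding T_iff by blast
  have sk: "sum (lpart k) V = l * sum (lpart f) V + (1 - l) * sum (lpart h) V"
    by (simp add: k_def lpart_def sum.distrib sum_distrib_left)
  have "sum (lpart k) V + k (Inr True) + k (Inr False) =
     l * (sum (lpart f) V + f (Inr True) + f (Inr False)) + (1 - l) * (sum (lpart h) V + h (Inr True) + h (Inr False))"
    unfolding sk by (simp add: k_def algebra_simps)
  also have "\<dots> = 1" using Hf(2) Hh by simp
  finally have s1: "sum (lpart k) V + k (Inr True) + k (Inr False) = 1" .
  have "k \<in> T" unfolding T_iff
  proof (intro conjI)
    show "\<forall>x. 0 \<le> k x" using nn by blast
    show "k (Inr True) = 0 \<or> k (Inr False) = 0" using Hf(4) zk by blast
    show "supp (lpart k) \<in> X \<or> supp (lpart k) = {}" using Hf(1) sl by simp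
    show "sum (lpart k) V + k (Inr True) + k (Inr False) = 1" by (rule s1)
    show "\<not> (k (Inr True) = 0 \<and> k (Inr False) = 0 \<and> supp (lpart k) \<in> Y)"
      using Hf(3) zk sl by simp
  qed
  then show ?thesis by (simp add: k_def)
qed

lemma phipsi_cont: "continuous_on T (phi \<circ> psi)" and phipsi_T: "(phi \<circ> psi) ` T \<subseteq> T"
proof -
  have "continuous_map (top_of_set T) (top_of_set T) (phi \<circ> psi)"
    using psi_cont phi_cont by (rule continuous_map_compose)
  then show "continuous_on T (phi \<circ> psi)" "(phi \<circ> psi) ` T \<subseteq> T" unfolding cm_tos by blast+
qed

lemma hom_T: "homotopic_with (\<lambda>x. True) (top_of_set T) (top_of_set T) (phi \<circ> psi) id"
  unfolding homotopic_with_def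
proof (intro exI conjI allI ballI)
  define K where "K = (\<lambda>p::real \<times> ('a + bool \<Rightarrow> real). (\<lambda>x. fst p * snd p x + (1 - fst p) * phi (psi (snd p)) x))"
  have c: "continuous_on ({0..1} \<times> T) (\<lambda>p. (phi \<circ> psi) (snd p))"
    by (rule continuous_on_compose2[OF phipsi_cont continuous_on_snd[OF continuous_on_id]]) auto
  have "continuous_on ({0..1} \<times> T) K"
  proof (rule continuous_on_coordinatewise_then_product)
    fix x
    have "continuous_on ({0..1} \<times> T) (\<lambda>p. (phi \<circ> psi) (snd p) x)" by (rule cont_app[OF c])
    then show "continuous_on ({0..1} \<times> T) (\<lambda>p. K p x)"
      unfolding K_def o_def by (intro continuous_intros)
  qed
  moreover have "K ` ({0..1} \<times> T) \<subseteq> T"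
  proof
    fix k assume "k \<in> K ` ({0..1} \<times> T)"
    then obtain l f where lf: "l \<in> {0..1}" "f \<in> T" "k = K (l, f)" by auto
    have "phi (psi f) \<in> T" using phipsi_T lf(2) by auto
    then have "(\<lambda>x. l * f x + (1 - l) * phi (psi f) x) \<in> T"
      using comb_T[OF lf(2) _ supp_phipsi[OF lf(2)]] lf(1) by auto
    then show "k \<in> T" using lf(3) by (simp add: K_def)
  qed
  ultimately show "continuous_map (prod_topology (top_of_set {0..1}) (top_of_set T)) (top_of_set T) K"
    unfolding prod_topology_subtopology_eu cm_tos by blast
  fix x
  show "K (0, x) = (phi \<circ> psi) x" by (simp add: K_def)
  show "K (1, x) = id x" by (simp add: K_def)
qed auto

definition s2 :: "('a \<Rightarrow> real) \<times> real \<Rightarrow> real" where "s2 p = sig (Fm p)"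

definition HS :: "real \<times> (bool + ('a \<Rightarrow> real) \<times> real) \<Rightarrow> bool + ('a \<Rightarrow> real) \<times> real" where
  "HS q = (case snd q of Inl b \<Rightarrow> Inl b
      | Inr p \<Rightarrow> susp_pt (fst p, fst q * snd p + (1 - fst q) * s2 p))"

lemma s2_range: "p \<in> Zs \<times> {0..1} \<Longrightarrow> 0 \<le> s2 p \<and> s2 p \<le> 1"
  unfolding s2_def using sig_range Fm_T by (metis mem_Times_iff)

lemma s2_cont: "continuous_on (Zs \<times> {0..1}) s2"
proof -
  have "continuous_on (Zs \<times> {0..1}) (sig \<circ> Fm)"
  proof (rule continuous_on_compose)
    show "continuous_on (Zs \<times> {0..1}) Fm" by (rule Fm_cont)
    show "continuous_on (Fm ` (Zs \<times> {0..1})) sig"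
      by (rule continuous_on_subset[OF sig_cont]) (use Fm_T in auto)
  qed
  then show ?thesis by (simp add: s2_def[abs_def] o_def)
qed

lemma HS_susp:
  assumes "p \<in> Zs \<times> {0..1}"
  shows "HS (l, susp_pt p) = susp_pt (fst p, l * snd p + (1 - l) * s2 p)"
proof -
  obtain g s where p: "p = (g, s)" by (cases p)
  show ?thesis
  proof (cases "s = 1")
    case True
    then have "s2 p = 1" using delta_Fm sig_delta by (simp add: s2_def p)
    then show ?thesis using True by (simp add: HS_def susp_pt_def p)
  next
    case F1: False
    show ?thesis
    proof (cases "s = 0")
      case True
      then have "s2 p = 0" using delta_Fm sig_delta by (simp add: s2_def p)
      then show ?thesis using True by (simp add: HS_def susp_pt_def p)
    next
      case False
      then show ?thesis using F1 by (simp add: HS_def susp_pt_def p)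
    qed
  qed
qed

lemma HS_cont:
  assumes "Zs \<noteq> {}"
  shows "continuous_map (prod_topology (top_of_set {0..1}) (suspension (top_of_set Zs)))
                        (suspension (top_of_set Zs)) HS"
proof -
  have q: "quotient_map (prod_topology (top_of_set {0..1::real}) (prod_topology (top_of_set Zs) (top_of_set {0..1})))
          (prod_topology (top_of_set {0..1::real}) (suspension (top_of_set Zs))) (\<lambda>(x, y). (x, susp_pt y))"
  proof (rule quotient_map_prod_right)
    show "locally_compact_space (top_of_set {0..1::real})"
      by (simp add: compact_imp_locally_compact_space compact_space_subtopology compactin_subtopology)
    show "Hausdorff_space (top_of_set {0..1::real}) \<or> regular_space (top_of_set {0..1::real})"
      by (simp add: Hausdorff_space_subtopology)
    show "quotient_map (prod_topology (top_of_set Zs) (top_of_set {0..1})) (suspension (top_of_set Zs)) susp_pt"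
      by (rule quotient_susp_pt) (use assms in simp)
  qed
  define R where "R = (\<lambda>q::real \<times> (('a \<Rightarrow> real) \<times> real). (fst (snd q), fst q * snd (snd q) + (1 - fst q) * s2 (snd q)))"
  have "continuous_map (top_of_set ({0..1} \<times> (Zs \<times> {0..1}))) (top_of_set (Zs \<times> {0..1})) R"
    unfolding cm_tos
  proof
    have c2: "continuous_on ({0..1} \<times> (Zs \<times> {0..1})) (\<lambda>q. s2 (snd q))"
      by (rule continuous_on_compose2[OF s2_cont continuous_on_snd[OF continuous_on_id]]) auto
    show "continuous_on ({0..1} \<times> (Zs \<times> {0..1})) R"
      unfolding R_def by (intro continuous_intros c2)
    show "R ` ({0..1} \<times> (Zs \<times> {0..1})) \<subseteq> Zs \<times> {0..1}"
    proof
      fix y assume "y \<in> R ` ({0..1} \<times> (Zs \<times> {0..1}))"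
      then obtain l p where lp: "l \<in> {0..1}" "p \<in> Zs \<times> {0..1}" "y = R (l, p)" by auto
      have "0 \<le> s2 p" "s2 p \<le> 1" using s2_range[OF lp(2)] by auto
      moreover have "0 \<le> snd p" "snd p \<le> 1" using lp(2) by auto
      ultimately have "0 \<le> l * snd p + (1 - l) * s2 p" "l * snd p + (1 - l) * s2 p \<le> 1"
        using conv01[of l "snd p" "s2 p"] lp(1) by auto
      then show "y \<in> Zs \<times> {0..1}" using lp by (auto simp: R_def)
    qed
  qed
  then have "continuous_map (prod_topology (top_of_set {0..1}) (prod_topology (top_of_set Zs) (top_of_set {0..1})))
      (prod_topology (top_of_set Zs) (top_of_set {0..1})) R"
    by simp
  then have "continuous_map (prod_topology (top_of_set {0..1}) (prod_topology (top_of_set Zs) (top_of_set {0..1})))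
      (suspension (top_of_set Zs)) (susp_pt \<circ> R)"
    using continuous_susp_pt by (rule continuous_map_compose)
  then have "continuous_map (prod_topology (top_of_set {0..1}) (prod_topology (top_of_set Zs) (top_of_set {0..1})))
      (suspension (top_of_set Zs)) (HS \<circ> (\<lambda>(x, y). (x, susp_pt y)))"
  proof (rule continuous_map_eq)
    fix q assume "q \<in> topspace (prod_topology (top_of_set {0..1::real}) (prod_topology (top_of_set Zs) (top_of_set {0..1::real})))"
    then obtain l p where "q = (l, p)" "p \<in> Zs \<times> {0..1}" by auto
    then show "(susp_pt \<circ> R) q = (HS \<circ> (\<lambda>(x, y). (x, susp_pt y))) q"
      by (simp add: HS_susp R_def)
  qed
  then show ?thesis using continuous_compose_quotient_map_eq[OF q] by blast
qed

lemma psiphi_Inr: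
  assumes "p \<in> Zs \<times> {0<..<1}"
  shows "psi (phi (Inr p)) = susp_pt (fst p, s2 p)"
proof -
  obtain g s where p: "p = (g, s)" by (cases p)
  have s: "0 < s" "s < 1" using assms p by auto
  define t where "t = \<bar>2 * s - 1\<bar>"
  have t: "t < 1" using s t_def by auto
  have ac: "Fm p (Inr True) + Fm p (Inr False) = t" by (auto simp: Fm_def p t_def)
  have "(\<lambda>v. Fm p (Inl v) / (1 - Fm p (Inr True) - Fm p (Inr False))) = g"
  proof
    fix v
    have e1: "1 - Fm p (Inr True) - Fm p (Inr False) = 1 - t" using ac by linarith
    have e2: "Fm p (Inl v) = (1 - t) * g v" by (simp add: Fm_def p t_def)
    show "Fm p (Inl v) / (1 - Fm p (Inr True) - Fm p (Inr False)) = g v" unfolding e1 e2 using t by simp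
  qed
  then have "Gm (Fm p) = (g, s2 p)" by (simp add: Gm_def s2_def)
  then show ?thesis by (simp add: phi_def psi_def p)
qed

lemma hom_S: "homotopic_with (\<lambda>x. True) (suspension (top_of_set Zs)) (suspension (top_of_set Zs)) (psi \<circ> phi) id"
proof (cases "Zs = {}")
  case True
  show ?thesis
  proof (rule homotopic_with_equal)
    show "continuous_map (suspension (top_of_set Zs)) (suspension (top_of_set Zs)) (psi \<circ> phi)"
      using phi_cont psi_cont by (rule continuous_map_compose)
    fix x assume "x \<in> topspace (suspension (top_of_set Zs))"
    then obtain b where "x = Inl b" using True by (auto simp: topspace_suspension)
    then show "(psi \<circ> phi) x = id x" by (simp add: phi_def psi_delta)
  qed auto
next
  case False
  have "homotopic_with (\<lambda>x. True) (suspension (top_of_set Zs)) (suspension (top_of_set Zs))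
          (\<lambda>x. HS (0, x)) (\<lambda>x. HS (1, x))"
    unfolding homotopic_with_def using HS_cont[OF False] by blast
  then show ?thesis
  proof (rule homotopic_with_eq)
    fix x assume "x \<in> topspace (suspension (top_of_set Zs))"
    then consider b where "x = Inl b" | p where "p \<in> Zs \<times> {0<..<1}" "x = Inr p"
      by (auto simp: topspace_suspension)
    note cases = this
    then show "(psi \<circ> phi) x = HS (0, x)"
    proof cases
      case 1 then show ?thesis by (simp add: phi_def psi_delta HS_def)
    next
      case 2 then show ?thesis by (simp add: psiphi_Inr HS_def)
    qed
    from cases show "id x = HS (1, x)"
    proof cases
      case 1 then show ?thesis by (simp add: HS_def)
    next
      case 2 then show ?thesis by (auto simp: HS_def susp_pt_def)
    qed
  qed auto
qed

end

theorem lemma4p5: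
  fixes X Y :: "'a set set"
  assumes "finite_simplicial_complex X"
    and "subcomplex Y X"
  shows "suspension (top_of_set (geom X - geom Y))
           homotopy_equivalent_space
         top_of_set (geom (susp_cx X) - geom (cx_image Inl Y))"
proof -
  interpret SC X Y using assms by (rule SC.intro)
  have "suspension (top_of_set Zs) homotopy_equivalent_space top_of_set T"
    unfolding homotopy_equivalent_space_def using phi_cont psi_cont hom_S hom_T by blast
  then show ?thesis by (simp add: Zs_def T_def)
qed

end
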